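(* Let $n\ge1$. There exist constants $C>0$ and $\delta_0>0$ depending only on $n$ such that for every $0<\delta<\delta_0$, every $B\in M_\delta^+$ and every eigenvalue $\lambda$ of $B$, we have $\lambda\in N^+_{C\delta}$. In particular ${\rm Re}\,\lambda>0$.
   Context: Writing $z=x+iy$ with $x,y$ real: $N_\epsilon^+=\{z\in\mathbb C:|y|<\epsilon x\}$ and $M_\delta^+=\{z\in{\rm Mat}(n,\mathbb C): z^T=z,\ \delta x+y\text{ and }\delta x-y\text{ positive definite}\}$. *)

theory Defs
  imports "HOL-Analysis.Analysis"
begin

definition pos_def_mat :: "real^'n^'n \<Rightarrow> bool" where
  "pos_def_mat M \<longleftrightarrow> transpose M = M \<and> (\<forall>x::real^'n. x \<noteq> 0 \<longrightarrow> x \<bullet> (M *v x) > 0)"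

definition re_mat :: "complex^'n^'m \<Rightarrow> real^'n^'m" where
  "re_mat B = (\<chi> i j. Re (B $ i $ j))"

definition im_mat :: "complex^'n^'m \<Rightarrow> real^'n^'m" where
  "im_mat B = (\<chi> i j. Im (B $ i $ j))"

definition N_plus :: "real \<Rightarrow> complex set" where
  "N_plus \<epsilon> = {z. \<bar>Im z\<bar> < \<epsilon> * Re z}"

definition M_plus :: "real \<Rightarrow> (complex^'n^'n) set" where
  "M_plus \<delta> = {B. transpose B = B \<and>
      pos_def_mat (\<delta> *\<^sub>R re_mat B + im_mat B) \<and>
      pos_def_mat (\<delta> *\<^sub>R re_mat B - im_mat B)}"

definition mat_eigenvalue :: "complex^'n^'n \<Rightarrow> complex \<Rightarrow> bool" where
  "mat_eigenvalue B lam \<longleftrightarrow> (\<exists>v::complex^'n. v \<noteq> 0 \<and> B *v v = lam *s v)"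

end

theory Submission
  imports Defs
begin

lemma symsum:
  fixes Y :: "'n::finite \<Rightarrow> 'n \<Rightarrow> real"
  assumes "\<And>i j. Y i j = Y j i"
  shows "(\<Sum>i\<in>UNIV. \<Sum>j\<in>UNIV. Y i j * (a i * b j - b i * a j)) = 0"
proof -
  have "(\<Sum>i\<in>UNIV. \<Sum>j\<in>UNIV. Y i j * (b i * a j)) = (\<Sum>j\<in>UNIV. \<Sum>i\<in>UNIV. Y i j * (b i * a j))"
    by (rule sum.swap)
  also have "\<dots> = (\<Sum>i\<in>UNIV. \<Sum>j\<in>UNIV. Y i j * (a i * b j))"
    using assms by (simp add: mult.commute mult.left_commute)
  finally show ?thesis by (simp add: right_diff_distrib sum_subtractf)
qed

lemma quad_re:
  fixes B :: "complex^'n^'n" and v :: "complex^'n"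
  assumes "transpose B = B"
  defines "a \<equiv> (\<chi> i. Re (v$i))" and "b \<equiv> (\<chi> i. Im (v$i))"
  shows "Re (\<Sum>i\<in>UNIV. cnj (v$i) * (B *v v)$i) = a \<bullet> (re_mat B *v a) + b \<bullet> (re_mat B *v b)"
    and "Im (\<Sum>i\<in>UNIV. cnj (v$i) * (B *v v)$i) = a \<bullet> (im_mat B *v a) + b \<bullet> (im_mat B *v b)"
proof -
  have sym: "B$i$j = B$j$i" for i j using assms
    by (metis transpose_def vec_lambda_beta)
  have symY: "Im (B$i$j) = Im (B$j$i)" for i j using sym by simp
  have "Re (\<Sum>i\<in>UNIV. cnj (v$i) * (B *v v)$i) =
     (\<Sum>i\<in>UNIV. \<Sum>j\<in>UNIV. Re (B$i$j) * (a$i * a$j + b$i * b$j)) -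
     (\<Sum>i\<in>UNIV. \<Sum>j\<in>UNIV. Im (B$i$j) * (a$i * b$j - b$i * a$j))"
    unfolding a_def b_def matrix_vector_mult_def
    by (simp add: Re_sum sum_distrib_left sum_subtractf[symmetric] algebra_simps)
  also have "\<dots> = a \<bullet> (re_mat B *v a) + b \<bullet> (re_mat B *v b)"
    using symsum[of "\<lambda>i j. Im (B$i$j)", OF symY]
    by (simp add: re_mat_def inner_vec_def matrix_vector_mult_def sum_distrib_left
        sum.distrib[symmetric] algebra_simps)
  finally show "Re (\<Sum>i\<in>UNIV. cnj (v$i) * (B *v v)$i) = a \<bullet> (re_mat B *v a) + b \<bullet> (re_mat B *v b)" .
  have "Im (\<Sum>i\<in>UNIV. cnj (v$i) * (B *v v)$i) =
     (\<Sum>i\<in>UNIV. \<Sum>j\<in>UNIV. Im (B$i$j) * (a$i * a$j + b$i * b$j)) +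
     (\<Sum>i\<in>UNIV. \<Sum>j\<in>UNIV. Re (B$i$j) * (a$i * b$j - b$i * a$j))"
    unfolding a_def b_def matrix_vector_mult_def
    by (simp add: Im_sum sum_distrib_left sum.distrib[symmetric] algebra_simps)
  also have "\<dots> = a \<bullet> (im_mat B *v a) + b \<bullet> (im_mat B *v b)"
    using symsum[of "\<lambda>i j. Re (B$i$j)"] sym
    by (simp add: im_mat_def inner_vec_def matrix_vector_mult_def sum_distrib_left
        sum.distrib[symmetric] algebra_simps)
  finally show "Im (\<Sum>i\<in>UNIV. cnj (v$i) * (B *v v)$i) = a \<bullet> (im_mat B *v a) + b \<bullet> (im_mat B *v b)" .
qed


lemma posq:
  fixes M :: "real^'n^'n" and a b :: "real^'n"
  assumes "pos_def_mat M" and "a \<noteq> 0 \<or> b \<noteq> 0"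
  shows "a \<bullet> (M *v a) + b \<bullet> (M *v b) > 0"
proof -
  have ge: "x \<bullet> (M *v x) \<ge> 0" for x
    using assms(1) unfolding pos_def_mat_def by (cases "x = 0") (auto intro: less_imp_le)
  show ?thesis using assms ge[of a] ge[of b] unfolding pos_def_mat_def
    by (metis add_pos_nonneg add_nonneg_pos)
qed

lemma lin_quad:
  fixes X Y :: "real^'n^'n" and a :: "real^'n"
  shows "a \<bullet> ((d *\<^sub>R X + Y) *v a) = d * (a \<bullet> (X *v a)) + a \<bullet> (Y *v a)"
    and "a \<bullet> ((d *\<^sub>R X - Y) *v a) = d * (a \<bullet> (X *v a)) - a \<bullet> (Y *v a)"
proof -
  have sc: "(d *\<^sub>R X) *v a = d *\<^sub>R (X *v a)"
    by (simp add: vec_eq_iff matrix_vector_mult_def sum_distrib_left mult.assoc)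
  show "a \<bullet> ((d *\<^sub>R X + Y) *v a) = d * (a \<bullet> (X *v a)) + a \<bullet> (Y *v a)"
    and "a \<bullet> ((d *\<^sub>R X - Y) *v a) = d * (a \<bullet> (X *v a)) - a \<bullet> (Y *v a)"
    by (simp_all add: sc matrix_vector_mult_add_rdistrib matrix_vector_mult_diff_rdistrib
      matrix_vector_mult_scaleR inner_add_right inner_diff_right)
qed

theorem proposition6p2:
  "\<exists>C \<delta>\<^sub>0. C > 0 \<and> \<delta>\<^sub>0 > 0 \<and>
     (\<forall>\<delta> B lam. 0 < \<delta> \<and> \<delta> < \<delta>\<^sub>0 \<and> B \<in> (M_plus \<delta> :: (complex^'n^'n) set) \<and> mat_eigenvalue B lam
        \<longrightarrow> lam \<in> N_plus (C * \<delta>) \<and> Re lam > 0)"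
proof (intro exI[of _ 1] conjI allI impI)
  fix \<delta> :: real and B :: "complex^'n^'n" and lam
  assume H: "0 < \<delta> \<and> \<delta> < 1 \<and> B \<in> M_plus \<delta> \<and> mat_eigenvalue B lam"
  then have d: "\<delta> > 0" and sym: "transpose B = B"
    and P1: "pos_def_mat (\<delta> *\<^sub>R re_mat B + im_mat B)"
    and P2: "pos_def_mat (\<delta> *\<^sub>R re_mat B - im_mat B)"
    unfolding M_plus_def by auto
  from H obtain v where v0: "v \<noteq> 0" and ev: "B *v v = lam *s v"
    unfolding mat_eigenvalue_def by auto
  define a where "a = (\<chi> i. Re (v$i))"
  define b where "b = (\<chi> i. Im (v$i))"
  have ab: "a \<noteq> 0 \<or> b \<noteq> 0"
  proof (rule ccontr)
    assume "\<not> ?thesis"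
    then have "v$i = 0" for i
      unfolding a_def b_def by (metis complex_eqI vec_lambda_beta zero_complex.simps zero_index)
    then show False using v0 by (simp add: vec_eq_iff)
  qed
  define S where "S = (\<Sum>i\<in>UNIV. cnj (v$i) * (B *v v)$i)"
  define n2 where "n2 = (\<Sum>i\<in>UNIV. (cmod (v$i))^2)"
  have n2pos: "n2 > 0"
  proof -
    obtain i where "v$i \<noteq> 0" using v0 by (metis vec_eq_iff zero_index)
    then have "(cmod (v$i))^2 > 0" by simp
    moreover have "(cmod (v$i))^2 \<le> n2" unfolding n2_def
      by (rule member_le_sum) auto
    ultimately show ?thesis by linarith
  qed
  have "S = lam * of_real n2"
  proof -
    have "S = (\<Sum>i\<in>UNIV. lam * (cnj (v$i) * v$i))" unfolding S_def ev
      by (simp add: algebra_simps)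
    also have "\<dots> = lam * of_real n2" unfolding n2_def
      unfolding of_real_sum sum_distrib_left
      by (intro sum.cong refl) (metis complex_norm_square mult.commute)
    finally show ?thesis .
  qed
  then have ReS: "Re S = Re lam * n2" and ImS: "Im S = Im lam * n2" by simp_all
  let ?QX = "a \<bullet> (re_mat B *v a) + b \<bullet> (re_mat B *v b)"
  let ?QY = "a \<bullet> (im_mat B *v a) + b \<bullet> (im_mat B *v b)"
  have qx: "Re S = ?QX" and qy: "Im S = ?QY"
    using quad_re[OF sym, of v] unfolding S_def a_def b_def by simp_all
  have "\<delta> * ?QX + ?QY > 0" using posq[OF P1 ab] lin_quad(1)[where d=\<delta> and X="re_mat B" and Y="im_mat B" and a=a] lin_quad(1)[where d=\<delta> and X="re_mat B" and Y="im_mat B" and a=b] by (simp only: distrib_left right_diff_distrib; linarith)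
  moreover have "\<delta> * ?QX - ?QY > 0" using posq[OF P2 ab] lin_quad(2)[where d=\<delta> and X="re_mat B" and Y="im_mat B" and a=a] lin_quad(2)[where d=\<delta> and X="re_mat B" and Y="im_mat B" and a=b] by (simp only: distrib_left right_diff_distrib; linarith)
  moreover have e1: "?QX = Re lam * n2" and e2: "?QY = Im lam * n2"
    using ReS ImS qx qy by simp_all
  ultimately have "\<bar>Im lam * n2\<bar> < \<delta> * (Re lam * n2)"
    by (simp only: e1 e2 abs_less_iff; linarith)
  then have "\<bar>Im lam\<bar> * n2 < (\<delta> * Re lam) * n2" using n2pos by (simp add: abs_mult)
  then have L: "\<bar>Im lam\<bar> < \<delta> * Re lam" using n2pos by simp
  then show "lam \<in> N_plus (1 * \<delta>)" unfolding N_plus_def by simp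
  from L d show "Re lam > 0" by (smt (verit) zero_less_mult_iff abs_ge_zero)
qed auto

end
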